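(* Let $S$ be a $1$-synchronizable system. Let $\tau\in T_0(S)$ and $a,b_1,\dots,b_n\in\Sigma_M$ be such that $\tau\cdot !?a\in T_0(S)$, $\tau\cdot !?b_1\cdots !?b_n\in T_0(S)$, and $\mathrm{src}(a)\neq\mathrm{src}(b_i)$ for all $i\in\{1,\dots,n\}$. Then $\tau\cdot !?a\cdot !?b_1\cdots !?b_n\in T_0(S)$, $\tau\cdot !?b_1\cdots !?b_n\cdot !?a\in T_0(S)$, and $\tau\cdot !?a\cdot !?b_1\cdots !?b_n\equiv_S\tau\cdot !?b_1\cdots !?b_n\cdot !?a$.
   Context: A message set $M=(\Sigma_M,N,\mathrm{src},\mathrm{dst})$: finite set of messages, $N\ge1$ peers, $\mathrm{src}(a)\neq\mathrm{dst}(a)\in\{1,\dots,N\}$. Actions $!a$ (by peer $\mathrm{src}(a)$), $?a$ (by peer $\mathrm{dst}(a)$); traces are finite action sequences; $!?a$ abbreviates $!a\cdot?a$. For a trace $\tau$, $\pi_!(\tau)$ is the sequence of sent messages; $\mathrm{buf}_{i\to j}(\tau)$ is the word $w$ (if any) with (sent on $i\to j$) $=$ (received on $i\to j$)$\cdot w$. $\tau$ is FIFO ($k$-bounded FIFO) if for all $i,j$ and prefixes $\tau'$, $\mathrm{buf}_{i\to j}(\tau')$ is defined (and has length $\le k$); synchronous if of the form $!?a_1\cdots!?a_k$. A system $S=(P_1,\dots,P_N)$: finite automata $P_i$ (all states accepting) over actions of peer $i$, with one FIFO channel per ordered pair $i\neq j$. A configuration: one control state per peer and contents $w_{i,j}$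 of channels; stable if all channels empty. $!a$ ($\mathrm{src}(a)=i,\mathrm{dst}(a)=j$) moves $P_i$ and appends $a$ to $w_{i,j}$; $?a$ moves $P_j$ and removes $a$ from the head of $w_{i,j}$; $c_0$ is the initial configuration. $T_k(S)$ ($k\ge1$): $k$-bounded FIFO traces $\tau$ with $c_0\xrightarrow{\tau}c$ for some $c$; $T_0(S)$: synchronous such traces; $T_\omega(S)=\bigcup_kT_k(S)$. $\tau_1\equiv_S\tau_2$ iff $\tau_1,\tau_2\in T_\omega(S)$ and there is $c$ with $c_0\xrightarrow{\tau_1}c$ and $c_0\xrightarrow{\tau_2}c$. $ST_k(S)=\{\pi_!(\tau)\mid\tau\in T_k(S)\}\cup\{(\pi_!(\tau),c)\mid c_0\xrightarrow{\tau}c,\ c\text{ stable},\ \tau\in T_k(S)\}$; $S$ is $1$-synchronizable if $ST_0(S)=ST_1(S)$. *)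

theory Defs
  imports Main
begin

record 'm msgset =
  msgs :: "'m set"
  npeers :: nat
  src :: "'m \<Rightarrow> nat"
  dst :: "'m \<Rightarrow> nat"

definition wf_msgset :: "'m msgset \<Rightarrow> bool" where
  "wf_msgset M \<longleftrightarrow> finite (msgs M) \<and> npeers M \<ge> 1 \<and>
     (\<forall>a\<in>msgs M. src M a \<noteq> dst M a \<and> src M a \<in> {1..npeers M} \<and> dst M a \<in> {1..npeers M})"

datatype 'm act = Send 'm | Recv 'm

fun actor :: "'m msgset \<Rightarrow> 'm act \<Rightarrow> nat" where
  "actor M (Send a) = src M a"
| "actor M (Recv a) = dst M a"

fun msg_of :: "'m act \<Rightarrow> 'm" where
  "msg_of (Send a) = a"
| "msg_of (Recv a) = a"

text \<open>sync [a1,...,ak] = !?a1 ... !?ak\<close>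
definition sync :: "'m list \<Rightarrow> 'm act list" where
  "sync as = concat (map (\<lambda>a. [Send a, Recv a]) as)"

definition synchronous :: "'m act list \<Rightarrow> bool" where
  "synchronous \<tau> \<longleftrightarrow> (\<exists>as. \<tau> = sync as)"

definition proj_send :: "'m act list \<Rightarrow> 'm list" where
  "proj_send \<tau> = [a. Send a \<leftarrow> \<tau>]"

definition sent_on :: "'m msgset \<Rightarrow> nat \<Rightarrow> nat \<Rightarrow> 'm act list \<Rightarrow> 'm list" where
  "sent_on M i j \<tau> = filter (\<lambda>a. src M a = i \<and> dst M a = j) (proj_send \<tau>)"

definition recv_on :: "'m msgset \<Rightarrow> nat \<Rightarrow> nat \<Rightarrow> 'm act list \<Rightarrow> 'm list" where
  "recv_on M i j \<tau> = filter (\<lambda>a. src M a = i \<and> dst M a = j) [a. Recv a \<leftarrow> \<tau>]"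

text \<open>buf_{i->j}(tau) is defined and equals w\<close>
definition buf_is :: "'m msgset \<Rightarrow> nat \<Rightarrow> nat \<Rightarrow> 'm act list \<Rightarrow> 'm list \<Rightarrow> bool" where
  "buf_is M i j \<tau> w \<longleftrightarrow> sent_on M i j \<tau> = recv_on M i j \<tau> @ w"

definition fifo_trace :: "'m msgset \<Rightarrow> 'm act list \<Rightarrow> bool" where
  "fifo_trace M \<tau> \<longleftrightarrow> (\<forall>\<tau>'. (\<exists>u. \<tau>' @ u = \<tau>) \<longrightarrow> (\<forall>i j. \<exists>w. buf_is M i j \<tau>' w))"

definition kbounded_trace :: "'m msgset \<Rightarrow> nat \<Rightarrow> 'm act list \<Rightarrow> bool" where
  "kbounded_trace M k \<tau> \<longleftrightarrow>
     (\<forall>\<tau>'. (\<exists>u. \<tau>' @ u = \<tau>) \<longrightarrow> (\<forall>i j. \<exists>w. buf_is M i j \<tau>' w \<and> length w \<le> k))"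

record ('s, 'm) peer =
  states :: "'s set"
  init :: 's
  trans :: "('s \<times> 'm act \<times> 's) set"

type_synonym ('s, 'm) system = "nat \<Rightarrow> ('s, 'm) peer"

definition wf_system :: "'m msgset \<Rightarrow> ('s, 'm) system \<Rightarrow> bool" where
  "wf_system M S \<longleftrightarrow> (\<forall>i\<in>{1..npeers M}.
     finite (states (S i)) \<and> init (S i) \<in> states (S i) \<and>
     (\<forall>(q, x, q') \<in> trans (S i). q \<in> states (S i) \<and> q' \<in> states (S i) \<and>
        msg_of x \<in> msgs M \<and> actor M x = i))"

text \<open>configuration: control state of each peer, and channel contents w i j\<close>
type_synonym ('s, 'm) config = "(nat \<Rightarrow> 's) \<times> (nat \<Rightarrow> nat \<Rightarrow> 'm list)"

definition init_config :: "('s, 'm) system \<Rightarrow> ('s, 'm) config" where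
  "init_config S = (\<lambda>i. init (S i), \<lambda>i j. [])"

definition stable :: "('s, 'm) config \<Rightarrow> bool" where
  "stable c \<longleftrightarrow> (\<forall>i j. snd c i j = [])"

fun step :: "'m msgset \<Rightarrow> ('s, 'm) system \<Rightarrow> ('s, 'm) config \<Rightarrow> 'm act \<Rightarrow> ('s, 'm) config \<Rightarrow> bool" where
  "step M S (q, w) (Send a) c' \<longleftrightarrow>
     (let i = src M a; j = dst M a in
      \<exists>q'. (q i, Send a, q') \<in> trans (S i) \<and>
            c' = (q(i := q'), w(i := (w i)(j := w i j @ [a]))))"
| "step M S (q, w) (Recv a) c' \<longleftrightarrow>
     (let i = src M a; j = dst M a in
      \<exists>q' rest. w i j = a # rest \<and> (q j, Recv a, q') \<in> trans (S j) \<and>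
            c' = (q(j := q'), w(i := (w i)(j := rest))))"

fun steps :: "'m msgset \<Rightarrow> ('s, 'm) system \<Rightarrow> ('s, 'm) config \<Rightarrow> 'm act list \<Rightarrow> ('s, 'm) config \<Rightarrow> bool" where
  "steps M S c [] c' \<longleftrightarrow> c' = c"
| "steps M S c (x # xs) c' \<longleftrightarrow> (\<exists>c''. step M S c x c'' \<and> steps M S c'' xs c')"

text \<open>T_k(S) for k >= 1, and T_0(S) = synchronous executable traces\<close>
definition T :: "'m msgset \<Rightarrow> ('s, 'm) system \<Rightarrow> nat \<Rightarrow> 'm act list set" where
  "T M S k = {\<tau>. (if k = 0 then synchronous \<tau> else kbounded_trace M k \<tau>) \<and>
                 (\<exists>c. steps M S (init_config S) \<tau> c)}"

definition T_omega :: "'m msgset \<Rightarrow> ('s, 'm) system \<Rightarrow> 'm act list set" where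
  "T_omega M S = (\<Union>k\<in>{1..}. T M S k)"

definition equiv_S :: "'m msgset \<Rightarrow> ('s, 'm) system \<Rightarrow> 'm act list \<Rightarrow> 'm act list \<Rightarrow> bool" where
  "equiv_S M S \<tau>1 \<tau>2 \<longleftrightarrow> \<tau>1 \<in> T_omega M S \<and> \<tau>2 \<in> T_omega M S \<and>
     (\<exists>c. steps M S (init_config S) \<tau>1 c \<and> steps M S (init_config S) \<tau>2 c)"

text \<open>ST_k(S): left component = send projections, right = (send projection, stable config)\<close>
definition ST :: "'m msgset \<Rightarrow> ('s, 'm) system \<Rightarrow> nat \<Rightarrow> ('m list + 'm list \<times> ('s, 'm) config) set" where
  "ST M S k = {Inl (proj_send \<tau>) | \<tau>. \<tau> \<in> T M S k} \<union>
     {Inr (proj_send \<tau>, c) | \<tau> c. \<tau> \<in> T M S k \<and> steps M S (init_config S) \<tau> c \<and> stable c}"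

definition one_synchronizable :: "'m msgset \<Rightarrow> ('s, 'm) system \<Rightarrow> bool" where
  "one_synchronizable M S \<longleftrightarrow> ST M S 0 = ST M S 1"

end

theory Submission
  imports Defs
begin

fun lsteps :: "('s, 'm) peer \<Rightarrow> 's \<Rightarrow> 'm act list \<Rightarrow> 's \<Rightarrow> bool" where
  "lsteps P q [] q' \<longleftrightarrow> q' = q"
| "lsteps P q (x # xs) q' \<longleftrightarrow> (\<exists>q''. (q, x, q'') \<in> trans P \<and> lsteps P q'' xs q')"

definition push :: "'m msgset \<Rightarrow> (nat \<Rightarrow> nat \<Rightarrow> 'm list) \<Rightarrow> 'm \<Rightarrow> (nat \<Rightarrow> nat \<Rightarrow> 'm list)" where
  "push M w a = w(src M a := (w (src M a))(dst M a := w (src M a) (dst M a) @ [a]))"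

definition setw :: "'m msgset \<Rightarrow> (nat \<Rightarrow> nat \<Rightarrow> 'm list) \<Rightarrow> 'm \<Rightarrow> 'm list \<Rightarrow> (nat \<Rightarrow> nat \<Rightarrow> 'm list)" where
  "setw M w a r = w(src M a := (w (src M a))(dst M a := r))"

lemma push_apply: "push M w a i j = (if i = src M a \<and> j = dst M a then w i j @ [a] else w i j)"
  by (simp add: push_def)

lemma setw_apply: "setw M w a r i j = (if i = src M a \<and> j = dst M a then r else w i j)"
  by (simp add: setw_def)

fun chsteps :: "'m msgset \<Rightarrow> (nat \<Rightarrow> nat \<Rightarrow> 'm list) \<Rightarrow> 'm act list \<Rightarrow> (nat \<Rightarrow> nat \<Rightarrow> 'm list) \<Rightarrow> bool" where
  "chsteps M w [] w' \<longleftrightarrow> w' = w"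
| "chsteps M w (Send a # t) w' \<longleftrightarrow>
     chsteps M (push M w a) t w'"
| "chsteps M w (Recv a # t) w' \<longleftrightarrow>
     (\<exists>rest. w (src M a) (dst M a) = a # rest \<and>
        chsteps M (setw M w a rest) t w')"

definition pr :: "'m msgset \<Rightarrow> nat \<Rightarrow> 'm act list \<Rightarrow> 'm act list" where
  "pr M i t = filter (\<lambda>x. actor M x = i) t"

lemma pr_simps[simp]: "pr M i [] = []"
  "pr M i (x # t) = (if actor M x = i then x # pr M i t else pr M i t)"
  "pr M i (t1 @ t2) = pr M i t1 @ pr M i t2"
  by (simp_all add: pr_def)

lemma sync_simps[simp]: "sync [] = []" "sync (m # ms) = Send m # Recv m # sync ms"
  "sync (xs @ ys) = sync xs @ sync ys"
  by (simp_all add: sync_def)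

lemma proj_send_simps[simp]: "proj_send [] = []" "proj_send (Send a # t) = a # proj_send t"
  "proj_send (Recv a # t) = proj_send t" "proj_send (t1 @ t2) = proj_send t1 @ proj_send t2"
  by (simp_all add: proj_send_def)

lemma proj_send_sync[simp]: "proj_send (sync ms) = ms"
  by (induction ms) auto

lemma lsteps_append: "lsteps P q (w1 @ w2) q' \<longleftrightarrow> (\<exists>q''. lsteps P q w1 q'' \<and> lsteps P q'' w2 q')"
  by (induction w1 arbitrary: q) auto

lemma chsteps_append: "chsteps M w (t1 @ t2) w'' \<longleftrightarrow> (\<exists>w'. chsteps M w t1 w' \<and> chsteps M w' t2 w'')"
proof (induction t1 arbitrary: w)
  case (Cons x t)
  show ?case
  proof (cases x)
    case (Send a)
    then show ?thesis by (simp add: Cons.IH)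
  next
    case (Recv a)
    then show ?thesis by (simp add: Cons.IH) metis
  qed
qed simp

lemma steps_char:
  "steps M S (q0, w0) t (q', w') \<longleftrightarrow>
     (\<forall>i. lsteps (S i) (q0 i) (pr M i t) (q' i)) \<and> chsteps M w0 t w'"
proof (induction t arbitrary: q0 w0)
  case Nil
  then show ?case by (auto simp: fun_eq_iff)
next
  case (Cons x t)
  show ?case
  proof (cases x)
    case (Send a)
    define i where "i = src M a"
    define W where "W = w0(i := (w0 i)(dst M a := w0 i (dst M a) @ [a]))"
    have "steps M S (q0, w0) (x # t) (q', w') \<longleftrightarrow>
      (\<exists>q''. (q0 i, Send a, q'') \<in> trans (S i) \<and> steps M S (q0(i := q''), W) t (q', w'))"
      using Send by (auto simp: i_def W_def Let_def)
    also have "\<dots> \<longleftrightarrow> (\<exists>q''. (q0 i, Send a, q'') \<in> trans (S i) \<and>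
       (\<forall>k. lsteps (S k) ((q0(i := q'')) k) (pr M k t) (q' k)) \<and> chsteps M W t w')"
      using Cons.IH by simp
    also have "\<dots> \<longleftrightarrow> (\<forall>k. lsteps (S k) (q0 k) (pr M k (x # t)) (q' k)) \<and> chsteps M W t w'"
    proof -
      have "(\<forall>k. lsteps (S k) (q0 k) (pr M k (x # t)) (q' k)) \<longleftrightarrow>
        (\<exists>q''. (q0 i, Send a, q'') \<in> trans (S i) \<and>
         (\<forall>k. lsteps (S k) ((q0(i := q'')) k) (pr M k t) (q' k)))"
      proof
        assume A: "\<forall>k. lsteps (S k) (q0 k) (pr M k (x # t)) (q' k)"
        from A[rule_format, of i] obtain q'' where q'': "(q0 i, Send a, q'') \<in> trans (S i)"
          "lsteps (S i) q'' (pr M i t) (q' i)" using Send by (auto simp: i_def)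
        have "\<forall>k. lsteps (S k) ((q0(i := q'')) k) (pr M k t) (q' k)"
        proof
          fix k show "lsteps (S k) ((q0(i := q'')) k) (pr M k t) (q' k)"
            using A[rule_format, of k] q'' by (cases "k = i") (auto simp: Send i_def)
        qed
        with q'' show "\<exists>q''. (q0 i, Send a, q'') \<in> trans (S i) \<and>
         (\<forall>k. lsteps (S k) ((q0(i := q'')) k) (pr M k t) (q' k))" by blast
      next
        assume "\<exists>q''. (q0 i, Send a, q'') \<in> trans (S i) \<and>
         (\<forall>k. lsteps (S k) ((q0(i := q'')) k) (pr M k t) (q' k))"
        then obtain q'' where q'': "(q0 i, Send a, q'') \<in> trans (S i)"
          "\<forall>k. lsteps (S k) ((q0(i := q'')) k) (pr M k t) (q' k)" by blast
        show "\<forall>k. lsteps (S k) (q0 k) (pr M k (x # t)) (q' k)"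
        proof
          fix k show "lsteps (S k) (q0 k) (pr M k (x # t)) (q' k)"
            using q''(1) q''(2)[rule_format, of k] by (cases "k = i") (auto simp: Send i_def)
        qed
      qed
      then show ?thesis by blast
    qed
    also have "\<dots> \<longleftrightarrow> (\<forall>i. lsteps (S i) (q0 i) (pr M i (x # t)) (q' i)) \<and> chsteps M w0 (x # t) w'" using Send by (simp add: W_def i_def push_def)
    finally show ?thesis .
  next
    case (Recv a)
    define i where "i = src M a"
    define j where "j = dst M a"
    show ?thesis
    proof (cases "\<exists>rest. w0 i j = a # rest")
      case False
      then show ?thesis using Recv by (auto simp: i_def j_def Let_def)
    next
      case True
      then obtain rest where rest: "w0 i j = a # rest" by blast
      define W where "W = w0(i := (w0 i)(j := rest))"
      have "steps M S (q0, w0) (x # t) (q', w') \<longleftrightarrow>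
        (\<exists>q''. (q0 j, Recv a, q'') \<in> trans (S j) \<and> steps M S (q0(j := q''), W) t (q', w'))"
        using Recv rest by (auto simp: i_def j_def W_def Let_def)
      also have "\<dots> \<longleftrightarrow> (\<exists>q''. (q0 j, Recv a, q'') \<in> trans (S j) \<and>
         (\<forall>k. lsteps (S k) ((q0(j := q'')) k) (pr M k t) (q' k)) \<and> chsteps M W t w')"
        using Cons.IH by simp
      also have "\<dots> \<longleftrightarrow> (\<forall>k. lsteps (S k) (q0 k) (pr M k (x # t)) (q' k)) \<and> chsteps M W t w'"
      proof -
        have "(\<forall>k. lsteps (S k) (q0 k) (pr M k (x # t)) (q' k)) \<longleftrightarrow>
          (\<exists>q''. (q0 j, Recv a, q'') \<in> trans (S j) \<and>
           (\<forall>k. lsteps (S k) ((q0(j := q'')) k) (pr M k t) (q' k)))"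
        proof
          assume A: "\<forall>k. lsteps (S k) (q0 k) (pr M k (x # t)) (q' k)"
          from A[rule_format, of j] obtain q'' where q'': "(q0 j, Recv a, q'') \<in> trans (S j)"
            "lsteps (S j) q'' (pr M j t) (q' j)" using Recv by (auto simp: j_def)
          have "\<forall>k. lsteps (S k) ((q0(j := q'')) k) (pr M k t) (q' k)"
          proof
            fix k show "lsteps (S k) ((q0(j := q'')) k) (pr M k t) (q' k)"
              using A[rule_format, of k] q'' by (cases "k = j") (auto simp: Recv j_def)
          qed
          with q'' show "\<exists>q''. (q0 j, Recv a, q'') \<in> trans (S j) \<and>
           (\<forall>k. lsteps (S k) ((q0(j := q'')) k) (pr M k t) (q' k))" by blast
        next
          assume "\<exists>q''. (q0 j, Recv a, q'') \<in> trans (S j) \<and>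
           (\<forall>k. lsteps (S k) ((q0(j := q'')) k) (pr M k t) (q' k))"
          then obtain q'' where q'': "(q0 j, Recv a, q'') \<in> trans (S j)"
            "\<forall>k. lsteps (S k) ((q0(j := q'')) k) (pr M k t) (q' k)" by blast
          show "\<forall>k. lsteps (S k) (q0 k) (pr M k (x # t)) (q' k)"
          proof
            fix k show "lsteps (S k) (q0 k) (pr M k (x # t)) (q' k)"
              using q''(1) q''(2)[rule_format, of k] by (cases "k = j") (auto simp: Recv j_def)
          qed
        qed
        then show ?thesis by blast
      qed
      also have "\<dots> \<longleftrightarrow> (\<forall>i. lsteps (S i) (q0 i) (pr M i (x # t)) (q' i)) \<and> chsteps M w0 (x # t) w'" using Recv rest by (simp add: W_def i_def j_def setw_def)
      finally show ?thesis .
    qed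
  qed
qed

definition bnd :: "(nat \<Rightarrow> nat \<Rightarrow> 'm list) \<Rightarrow> bool" where
  "bnd w \<longleftrightarrow> (\<forall>i j. length (w i j) \<le> 1)"

definition goodc :: "'m msgset \<Rightarrow> (nat \<Rightarrow> nat \<Rightarrow> 'm list) \<Rightarrow> 'm act list \<Rightarrow> (nat \<Rightarrow> nat \<Rightarrow> 'm list) \<Rightarrow> bool" where
  "goodc M w t w' \<longleftrightarrow> (\<forall>n. \<exists>v. chsteps M w (take n t) v \<and> bnd v) \<and> chsteps M w t w'"

lemma goodc_Nil: "bnd w \<Longrightarrow> goodc M w [] w"
  by (auto simp: goodc_def)

lemma goodc_append: assumes "goodc M w t1 w1" "goodc M w1 t2 w2" shows "goodc M w (t1 @ t2) w2"
  unfolding goodc_def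
proof
  show "chsteps M w (t1 @ t2) w2" using assms by (auto simp: goodc_def chsteps_append)
  show "\<forall>n. \<exists>v. chsteps M w (take n (t1 @ t2)) v \<and> bnd v"
  proof
    fix n
    show "\<exists>v. chsteps M w (take n (t1 @ t2)) v \<and> bnd v"
    proof (cases "n \<le> length t1")
      case True
      then show ?thesis using assms(1) by (auto simp: goodc_def)
    next
      case False
      then have e: "take n (t1 @ t2) = t1 @ take (n - length t1) t2" by simp
      from assms(2) obtain v where "chsteps M w1 (take (n - length t1) t2) v" "bnd v"
        by (auto simp: goodc_def)
      then show ?thesis using assms(1) e by (auto simp: goodc_def chsteps_append)
    qed
  qed
qed

lemma goodc_Cons1: assumes "bnd w" "chsteps M w [x] w1" "bnd w1" shows "goodc M w [x] w1"
  unfolding goodc_def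
proof
  show "\<forall>n. \<exists>v. chsteps M w (take n [x]) v \<and> bnd v"
  proof
    fix n show "\<exists>v. chsteps M w (take n [x]) v \<and> bnd v"
      using assms by (cases n) auto
  qed
qed (rule assms(2))

lemma goodc_send: assumes "bnd w" "w (src M a) (dst M a) = []"
  shows "goodc M w [Send a] (push M w a)"
  using assms by (intro goodc_Cons1) (auto simp: bnd_def push_apply)

lemma goodc_recv: assumes "bnd w" "w (src M a) (dst M a) = [a]"
  shows "goodc M w [Recv a] (setw M w a [])"
  using assms by (intro goodc_Cons1) (auto simp: bnd_def setw_apply)

lemma goodc_sync: assumes "bnd w" "\<forall>m\<in>set ms. w (src M m) (dst M m) = []"
  shows "goodc M w (sync ms) w"
  using assms(2)
proof (induction ms)
  case Nil
  then show ?case using assms(1) by (simp add: goodc_Nil)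
next
  case (Cons m ms)
  have 1: "goodc M w [Send m] (push M w m)" using Cons.prems assms(1) by (intro goodc_send) auto
  have 2: "goodc M (push M w m) [Recv m] (setw M (push M w m) m [])"
    using Cons.prems assms(1) by (intro goodc_recv) (auto simp: bnd_def push_apply)
  have e: "setw M (push M w m) m [] = w"
    using Cons.prems by (auto simp: fun_eq_iff push_apply setw_apply)
  have 3: "goodc M w (sync ms) w" using Cons by simp
  have "goodc M w ([Send m] @ [Recv m] @ sync ms) w"
    using 1 2 3 e by (metis goodc_append)
  then show ?case by simp
qed

lemma chsteps_inv: "chsteps M w0 t w \<Longrightarrow> w0 i j @ sent_on M i j t = recv_on M i j t @ w i j"
proof (induction t arbitrary: w0)
  case Nil
  then show ?case by (simp add: sent_on_def recv_on_def)
next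
  case (Cons x t)
  show ?case
  proof (cases x)
    case (Send a)
    then have "chsteps M (push M w0 a) t w" using Cons.prems by simp
    from Cons.IH[OF this] show ?thesis using Send
      by (auto simp: sent_on_def recv_on_def push_apply)
  next
    case (Recv a)
    then obtain rest where r: "w0 (src M a) (dst M a) = a # rest" "chsteps M (setw M w0 a rest) t w"
      using Cons.prems by auto
    from Cons.IH[OF r(2)] show ?thesis using Recv r(1)
      by (auto simp: sent_on_def recv_on_def setw_apply)
  qed
qed

lemma K1:
  assumes "goodc M (\<lambda>i j. []) t wE" "\<forall>i. lsteps (S i) (init (S i)) (pr M i t) (q i)"
  shows "t \<in> T M S 1 \<and> steps M S (init_config S) t (q, wE)"
proof -
  have st: "steps M S (init_config S) t (q, wE)"
    using assms by (simp add: init_config_def steps_char goodc_def)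
  have "kbounded_trace M 1 t"
    unfolding kbounded_trace_def
  proof (intro allI impI)
    fix \<tau>' i j assume "\<exists>u. \<tau>' @ u = t"
    then have e: "\<tau>' = take (length \<tau>') t" by auto
    from assms(1) obtain v where v: "chsteps M (\<lambda>i j. []) (take (length \<tau>') t) v" "bnd v"
      by (auto simp: goodc_def)
    have "buf_is M i j \<tau>' (v i j)" using chsteps_inv[OF v(1), of i j] e
      by (simp add: buf_is_def)
    then show "\<exists>w. buf_is M i j \<tau>' w \<and> length w \<le> 1" using v(2) by (auto simp: bnd_def)
  qed
  then show ?thesis using st by (auto simp: T_def)
qed

lemma T0_iff: "sync ms \<in> T M S 0 \<longleftrightarrow> (\<forall>i. \<exists>x. lsteps (S i) (init (S i)) (pr M i (sync ms)) x)"
proof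
  assume "sync ms \<in> T M S 0"
  then obtain c where "steps M S (init_config S) (sync ms) c" by (auto simp: T_def)
  then show "\<forall>i. \<exists>x. lsteps (S i) (init (S i)) (pr M i (sync ms)) x"
    by (cases c) (auto simp: init_config_def steps_char)
next
  assume "\<forall>i. \<exists>x. lsteps (S i) (init (S i)) (pr M i (sync ms)) x"
  then obtain q where q: "\<forall>i. lsteps (S i) (init (S i)) (pr M i (sync ms)) (q i)" by metis
  have "goodc M (\<lambda>i j. []) (sync ms) (\<lambda>i j. [])" by (rule goodc_sync) (auto simp: bnd_def)
  then have "steps M S (init_config S) (sync ms) (q, \<lambda>i j. [])"
    using q by (simp add: init_config_def steps_char goodc_def)
  then show "sync ms \<in> T M S 0" by (auto simp: T_def synchronous_def)
qed

lemma sync_reach: "steps M S (init_config S) (sync ms) (q, w) \<Longrightarrow> lsteps (S i) (init (S i)) (pr M i (sync ms)) (q i)"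
  by (simp add: init_config_def steps_char)

lemma sync_reach2: "\<forall>i. lsteps (S i) (init (S i)) (pr M i (sync ms)) (q i) \<Longrightarrow> steps M S (init_config S) (sync ms) (q, \<lambda>i j. [])"
proof -
  assume q: "\<forall>i. lsteps (S i) (init (S i)) (pr M i (sync ms)) (q i)"
  have "goodc M (\<lambda>i j. []) (sync ms) (\<lambda>i j. [])" by (rule goodc_sync) (auto simp: bnd_def)
  then show ?thesis using q by (simp add: init_config_def steps_char goodc_def)
qed

lemma T0_T1: "sync ms \<in> T M S 0 \<Longrightarrow> sync ms \<in> T M S 1"
proof -
  assume "sync ms \<in> T M S 0"
  then obtain q where q: "\<forall>i. lsteps (S i) (init (S i)) (pr M i (sync ms)) (q i)"
    unfolding T0_iff by metis
  have "goodc M (\<lambda>i j. []) (sync ms) (\<lambda>i j. [])" by (rule goodc_sync) (auto simp: bnd_def)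
  then show ?thesis using K1 q by blast
qed

lemma T0_prefix: "sync (xs @ ys) \<in> T M S 0 \<Longrightarrow> sync xs \<in> T M S 0"
proof -
  assume "sync (xs @ ys) \<in> T M S 0"
  then have A: "\<forall>i. \<exists>x. lsteps (S i) (init (S i)) (pr M i (sync xs) @ pr M i (sync ys)) x"
    unfolding T0_iff by simp
  show ?thesis unfolding T0_iff
  proof
    fix i from A obtain x where "lsteps (S i) (init (S i)) (pr M i (sync xs) @ pr M i (sync ys)) x" by blast
    then show "\<exists>x. lsteps (S i) (init (S i)) (pr M i (sync xs)) x" unfolding lsteps_append by blast
  qed
qed

lemma sync_of_T0: "\<tau> \<in> T M S 0 \<Longrightarrow> \<tau> = sync (proj_send \<tau>)"
  by (auto simp: T_def synchronous_def)

lemma OS1: assumes "one_synchronizable M S" "t \<in> T M S 1"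
  shows "sync (proj_send t) \<in> T M S 0"
proof -
  have "Inl (proj_send t) \<in> ST M S 1" using assms(2) by (auto simp: ST_def)
  then have "Inl (proj_send t) \<in> ST M S 0" using assms(1) by (simp add: one_synchronizable_def)
  then obtain \<tau>0 where "\<tau>0 \<in> T M S 0" "proj_send \<tau>0 = proj_send t" by (auto simp: ST_def)
  then show ?thesis using sync_of_T0 by metis
qed

lemma OS2: assumes "one_synchronizable M S" "t \<in> T M S 1" "steps M S (init_config S) t c" "stable c"
  shows "steps M S (init_config S) (sync (proj_send t)) c"
proof -
  have "Inr (proj_send t, c) \<in> ST M S 1" using assms(2-4) unfolding ST_def by blast
  then have "Inr (proj_send t, c) \<in> ST M S 0" using assms(1) by (simp add: one_synchronizable_def)
  then obtain \<tau>0 where "\<tau>0 \<in> T M S 0" "proj_send \<tau>0 = proj_send t" "steps M S (init_config S) \<tau>0 c"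
    by (auto simp: ST_def)
  then show ?thesis using sync_of_T0 by metis
qed


lemma G1:
  assumes os: "one_synchronizable M S" and wfa: "src M a \<noteq> dst M a"
    and "sync (ts @ [a]) \<in> T M S 0" "sync (ts @ bs) \<in> T M S 0" "\<forall>b\<in>set bs. src M b \<noteq> src M a"
  shows "sync (ts @ a # bs) \<in> T M S 0"
  using assms(3-5)
proof (induction bs rule: rev_induct)
  case Nil thus ?case by simp
next
  case (snoc b bs)
  have T0bs: "sync (ts @ bs) \<in> T M S 0" using snoc.prems(2) T0_prefix[of "ts @ bs" "[b]"] by simp
  have IH: "sync (ts @ a # bs) \<in> T M S 0" using snoc.IH snoc.prems T0bs by simp
  obtain y1 where y1: "\<forall>i. lsteps (S i) (init (S i)) (pr M i (sync (ts @ a # bs))) (y1 i)"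
    using IH unfolding T0_iff by metis
  obtain y2 where y2: "\<forall>i. lsteps (S i) (init (S i)) (pr M i (sync (ts @ bs @ [b]))) (y2 i)"
    using snoc.prems(2) unfolding T0_iff by metis
  define t where "t = sync ts @ [Send a] @ sync bs @ [Send b]"
  have "\<forall>i. \<exists>x. lsteps (S i) (init (S i)) (pr M i t) x"
  proof
    fix i show "\<exists>x. lsteps (S i) (init (S i)) (pr M i t) x"
    proof (cases "i = src M a")
      case True
      then have "pr M i t = pr M i (sync (ts @ a # bs))" using wfa snoc.prems(3) by (simp add: t_def)
      then show ?thesis using y1 by metis
    next
      case False
      then have "pr M i (sync (ts @ bs @ [b])) = pr M i t @ pr M i [Recv b]" by (simp add: t_def)
      then have "lsteps (S i) (init (S i)) (pr M i t @ pr M i [Recv b]) (y2 i)" using y2 by metis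
      then show ?thesis unfolding lsteps_append by blast
    qed
  qed
  then obtain q where q: "\<forall>i. lsteps (S i) (init (S i)) (pr M i t) (q i)" by metis
  have g1: "goodc M (\<lambda>i j. []) (sync ts) (\<lambda>i j. [])" by (rule goodc_sync) (auto simp: bnd_def)
  define W1 where "W1 = push M (\<lambda>i j. []) a"
  have g2: "goodc M (\<lambda>i j. []) [Send a] W1" unfolding W1_def by (rule goodc_send) (auto simp: bnd_def)
  have bW1: "bnd W1" by (auto simp: bnd_def W1_def push_apply)
  have g3: "goodc M W1 (sync bs) W1" using snoc.prems(3) bW1
    by (intro goodc_sync) (auto simp: W1_def push_apply)
  have g4: "goodc M W1 [Send b] (push M W1 b)" using snoc.prems(3) bW1
    by (intro goodc_send) (auto simp: W1_def push_apply)
  have "goodc M (\<lambda>i j. []) t (push M W1 b)" unfolding t_def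
    by (rule goodc_append[OF g1 goodc_append[OF g2 goodc_append[OF g3 g4]]])
  then have "t \<in> T M S 1" using K1 q by blast
  from OS1[OF os this] show ?case by (simp add: t_def)
qed

lemma SWP:
  assumes os: "one_synchronizable M S" and wfa: "src M a \<noteq> dst M a"
    and db: "dst M b = src M a" and sb: "src M b \<noteq> src M a"
    and T0: "sync (ts @ b # a # rest) \<in> T M S 0"
    and x: "lsteps (S (src M a)) (init (S (src M a))) (pr M (src M a) (sync (ts @ a # b # rest))) x"
  shows "lsteps (S (src M a)) (init (S (src M a))) (pr M (src M a) (sync (ts @ b # a # rest))) x"
proof -
  define p where "p = src M a"
  obtain y where y: "\<forall>i. lsteps (S i) (init (S i)) (pr M i (sync (ts @ b # a # rest))) (y i)"
    using T0 unfolding T0_iff by metis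
  define t where "t = sync ts @ [Send b, Send a, Recv b, Recv a] @ sync rest"
  define qq where "qq = y(p := x)"
  have q: "\<forall>i. lsteps (S i) (init (S i)) (pr M i t) (qq i)"
  proof
    fix i show "lsteps (S i) (init (S i)) (pr M i t) (qq i)"
    proof (cases "i = p")
      case True
      have "pr M i t = pr M i (sync (ts @ a # b # rest))" using True wfa db sb by (simp add: t_def p_def)
      then show ?thesis using x True by (simp add: qq_def p_def)
    next
      case False
      have "pr M i t = pr M i (sync (ts @ b # a # rest))" using False db by (simp add: t_def p_def)
      then show ?thesis using y False by (simp add: qq_def)
    qed
  qed
  have g1: "goodc M (\<lambda>i j. []) (sync ts) (\<lambda>i j. [])" by (rule goodc_sync) (auto simp: bnd_def)
  define W1 where "W1 = push M (\<lambda>i j. []) b"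
  define W2 where "W2 = push M W1 a"
  define W3 where "W3 = setw M W2 b []"
  define W4 where "W4 = setw M W3 a []"
  have g2: "goodc M (\<lambda>i j. []) [Send b] W1" unfolding W1_def by (rule goodc_send) (auto simp: bnd_def)
  have g3: "goodc M W1 [Send a] W2" unfolding W2_def using db sb
    by (intro goodc_send) (auto simp: bnd_def W1_def push_apply)
  have g4: "goodc M W2 [Recv b] W3" unfolding W3_def using db sb
    by (intro goodc_recv) (auto simp: bnd_def W1_def W2_def push_apply)
  have g5: "goodc M W3 [Recv a] W4" unfolding W4_def using db sb
    by (intro goodc_recv) (auto simp: bnd_def W1_def W2_def W3_def push_apply setw_apply)
  have W4e: "\<And>i j. W4 i j = []" using db sb
    by (auto simp: W1_def W2_def W3_def W4_def push_apply setw_apply)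
  have g6: "goodc M W4 (sync rest) W4" using W4e by (intro goodc_sync) (auto simp: bnd_def)
  have "goodc M (\<lambda>i j. []) (sync ts @ [Send b] @ [Send a] @ [Recv b] @ [Recv a] @ sync rest) W4"
    by (rule goodc_append[OF g1 goodc_append[OF g2 goodc_append[OF g3 goodc_append[OF g4 goodc_append[OF g5 g6]]]]])
  then have "goodc M (\<lambda>i j. []) t W4" by (simp add: t_def)
  then have tT: "t \<in> T M S 1" and st: "steps M S (init_config S) t (qq, W4)" using K1 q by blast+
  have "stable (qq, W4)" using W4e by (simp add: stable_def)
  from OS2[OF os tT st this] have "steps M S (init_config S) (sync (ts @ b # a # rest)) (qq, W4)"
    by (simp add: t_def)
  from sync_reach[OF this, of p] show ?thesis by (simp add: qq_def p_def)
qed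


lemma G2:
  assumes os: "one_synchronizable M S" and wf: "\<forall>m\<in>set (a # bs). src M m \<noteq> dst M m"
    and "sync (ts @ [a]) \<in> T M S 0" "sync (ts @ bs) \<in> T M S 0" "\<forall>b\<in>set bs. src M b \<noteq> src M a"
  shows "sync (ts @ bs @ [a]) \<in> T M S 0"
  using assms(2-5)
proof (induction bs arbitrary: ts)
  case Nil thus ?case by simp
next
  case (Cons b bs)
  have T0b: "sync (ts @ [b]) \<in> T M S 0" using Cons.prems(3) T0_prefix[of "ts @ [b]" bs] by simp
  have T0ba: "sync (ts @ [b] @ [a]) \<in> T M S 0"
    using G1[OF os, of b ts "[a]"] Cons.prems T0b by auto
  have "sync ((ts @ [b]) @ bs @ [a]) \<in> T M S 0"
    using Cons.IH[of "ts @ [b]"] Cons.prems T0ba by auto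
  then show ?case by simp
qed

lemma Chain:
  assumes os: "one_synchronizable M S" and wf: "\<forall>m\<in>set (a # bs). src M m \<noteq> dst M m"
    and "sync (ts @ [a]) \<in> T M S 0" "sync (ts @ bs) \<in> T M S 0" "\<forall>b\<in>set bs. src M b \<noteq> src M a"
    and "lsteps (S (src M a)) (init (S (src M a))) (pr M (src M a) (sync (ts @ a # bs))) x"
  shows "lsteps (S (src M a)) (init (S (src M a))) (pr M (src M a) (sync (ts @ bs @ [a]))) x"
  using assms(2-6)
proof (induction bs arbitrary: ts)
  case Nil thus ?case by simp
next
  case (Cons b bs)
  have wfa: "src M a \<noteq> dst M a" using Cons.prems(1) by simp
  have T0b: "sync (ts @ [b]) \<in> T M S 0" using Cons.prems(3) T0_prefix[of "ts @ [b]" bs] by simp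
  have T0ba: "sync (ts @ [b] @ [a]) \<in> T M S 0"
    using G1[OF os, of b ts "[a]"] Cons.prems T0b by auto
  have T0bab: "sync (ts @ b # a # bs) \<in> T M S 0"
    using G1[OF os wfa, of "ts @ [b]" bs] Cons.prems T0ba by auto
  have x': "lsteps (S (src M a)) (init (S (src M a))) (pr M (src M a) (sync (ts @ b # a # bs))) x"
  proof (cases "dst M b = src M a")
    case True
    show ?thesis by (rule SWP[OF os wfa True _ T0bab]) (use Cons.prems in auto)
  next
    case False
    have "pr M (src M a) (sync (ts @ b # a # bs)) = pr M (src M a) (sync (ts @ a # b # bs))"
      using False Cons.prems(4) by auto
    then show ?thesis using Cons.prems(5) by simp
  qed
  have "lsteps (S (src M a)) (init (S (src M a))) (pr M (src M a) (sync ((ts @ [b]) @ bs @ [a]))) x"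
    using Cons.IH[of "ts @ [b]"] Cons.prems T0ba x' by auto
  then show ?case by simp
qed

lemma G3:
  assumes os: "one_synchronizable M S" and wf: "\<forall>m\<in>set (a # bs). src M m \<noteq> dst M m"
    and A: "sync (ts @ [a]) \<in> T M S 0" and B: "sync (ts @ bs) \<in> T M S 0"
    and C: "\<forall>b\<in>set bs. src M b \<noteq> src M a"
  shows "\<exists>c. steps M S (init_config S) (sync (ts @ a # bs)) c \<and>
             steps M S (init_config S) (sync (ts @ bs @ [a])) c"
proof -
  define p where "p = src M a"
  define q where "q = dst M a"
  have wfa: "p \<noteq> q" using wf by (simp add: p_def q_def)
  have T1: "sync (ts @ a # bs) \<in> T M S 0" using G1[OF os _ A B C] wf by simp
  have T2: "sync (ts @ bs @ [a]) \<in> T M S 0" using G2[OF os wf A B C] .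
  obtain y1 where y1: "\<forall>i. lsteps (S i) (init (S i)) (pr M i (sync (ts @ a # bs))) (y1 i)"
    using T1 unfolding T0_iff by metis
  obtain y2 where y2: "\<forall>i. lsteps (S i) (init (S i)) (pr M i (sync (ts @ bs @ [a]))) (y2 i)"
    using T2 unfolding T0_iff by metis
  have chp: "lsteps (S p) (init (S p)) (pr M p (sync (ts @ bs @ [a]))) (y1 p)"
    unfolding p_def by (rule Chain[OF os wf A B C]) (use y1 in blast)
  define cq where "cq = y1(q := y2 q)"
  have R2: "steps M S (init_config S) (sync (ts @ bs @ [a])) (cq, \<lambda>i j. [])"
  proof (rule sync_reach2, rule allI)
    fix i show "lsteps (S i) (init (S i)) (pr M i (sync (ts @ bs @ [a]))) (cq i)"
    proof (cases "i = q")
      case True then show ?thesis using y2 by (simp add: cq_def)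
    next
      case False
      show ?thesis
      proof (cases "i = p")
        case True then show ?thesis using chp wfa by (simp add: cq_def)
      next
        case False': False
        have "pr M i (sync (ts @ bs @ [a])) = pr M i (sync (ts @ a # bs))"
          using False False' by (simp add: p_def q_def)
        then show ?thesis using y1 False by (simp add: cq_def)
      qed
    qed
  qed
  define t where "t = sync ts @ [Send a] @ sync bs @ [Recv a]"
  have qt: "\<forall>i. lsteps (S i) (init (S i)) (pr M i t) (cq i)"
  proof
    fix i show "lsteps (S i) (init (S i)) (pr M i t) (cq i)"
    proof (cases "i = q")
      case True
      have "pr M i t = pr M i (sync (ts @ bs @ [a]))" using True wfa by (simp add: t_def p_def q_def)
      then show ?thesis using y2 True by (simp add: cq_def)
    next
      case False
      have "pr M i t = pr M i (sync (ts @ a # bs))" using False by (simp add: t_def q_def)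
      then show ?thesis using y1 False by (simp add: cq_def)
    qed
  qed
  have g1: "goodc M (\<lambda>i j. []) (sync ts) (\<lambda>i j. [])" by (rule goodc_sync) (auto simp: bnd_def)
  define W1 where "W1 = push M (\<lambda>i j. []) a"
  define W2 where "W2 = setw M W1 a []"
  have g2: "goodc M (\<lambda>i j. []) [Send a] W1" unfolding W1_def by (rule goodc_send) (auto simp: bnd_def)
  have bW1: "bnd W1" by (auto simp: bnd_def W1_def push_apply)
  have g3: "goodc M W1 (sync bs) W1" using C bW1
    by (intro goodc_sync) (auto simp: W1_def push_apply)
  have g4: "goodc M W1 [Recv a] W2" unfolding W2_def using bW1
    by (intro goodc_recv) (auto simp: W1_def push_apply)
  have W2e: "W2 = (\<lambda>i j. [])" by (auto simp: fun_eq_iff W1_def W2_def push_apply setw_apply)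
  have "goodc M (\<lambda>i j. []) t W2" unfolding t_def
    by (rule goodc_append[OF g1 goodc_append[OF g2 goodc_append[OF g3 g4]]])
  then have tT: "t \<in> T M S 1" and st: "steps M S (init_config S) t (cq, W2)" using K1 qt by blast+
  have "stable (cq, W2)" using W2e by (simp add: stable_def)
  from OS2[OF os tT st this] have R1: "steps M S (init_config S) (sync (ts @ a # bs)) (cq, \<lambda>i j. [])"
    using W2e by (simp add: t_def)
  show ?thesis using R1 R2 by blast
qed


theorem lemma4p5:
  fixes M :: "'m msgset" and S :: "('s, 'm) system"
    and \<tau> :: "'m act list" and a :: 'm and bs :: "'m list"
  assumes "wf_msgset M" and "wf_system M S"
    and "one_synchronizable M S"
    and "\<tau> \<in> T M S 0"
    and "a \<in> msgs M" and "set bs \<subseteq> msgs M"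
    and "\<tau> @ sync [a] \<in> T M S 0"
    and "\<tau> @ sync bs \<in> T M S 0"
    and "\<forall>b\<in>set bs. src M a \<noteq> src M b"
  shows "\<tau> @ sync [a] @ sync bs \<in> T M S 0 \<and>
         \<tau> @ sync bs @ sync [a] \<in> T M S 0 \<and>
         equiv_S M S (\<tau> @ sync [a] @ sync bs) (\<tau> @ sync bs @ sync [a])"
proof -
  define ts where "ts = proj_send \<tau>"
  have te: "\<tau> = sync ts" using sync_of_T0[OF assms(4)] by (simp add: ts_def)
  have wf: "\<forall>m\<in>set (a # bs). src M m \<noteq> dst M m"
    using assms(1,5,6) by (auto simp: wf_msgset_def)
  have A: "sync (ts @ [a]) \<in> T M S 0" using assms(7) te by simp
  have B: "sync (ts @ bs) \<in> T M S 0" using assms(8) te by simp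
  have C: "\<forall>b\<in>set bs. src M b \<noteq> src M a" using assms(9) by auto
  have e1: "\<tau> @ sync [a] @ sync bs = sync (ts @ a # bs)" using te by simp
  have e2: "\<tau> @ sync bs @ sync [a] = sync (ts @ bs @ [a])" using te by simp
  have T1: "sync (ts @ a # bs) \<in> T M S 0" using G1[OF assms(3) _ A B C] wf by simp
  have T2: "sync (ts @ bs @ [a]) \<in> T M S 0" using G2[OF assms(3) wf A B C] .
  have "equiv_S M S (sync (ts @ a # bs)) (sync (ts @ bs @ [a]))"
    unfolding equiv_S_def T_omega_def
    using T0_T1[OF T1] T0_T1[OF T2] G3[OF assms(3) wf A B C] by auto
  then show ?thesis using T1 T2 e1 e2 by simp
qed

end
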